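(* Let $(X,\mathcal{O})$ be a $\sigma$-compact metrizable space without isolated points and $K$ a partition of $X$ parametrized by a locally finite bi-infinite tree with reference point $(T,\pi,\phi)$. (1) For any metric $d$ on $X$ inducing $\mathcal{O}$ with $\mathrm{diam}(X,d)=\infty$, the function $g_d(w)=\mathrm{diam}(K_w,d)$ is a weight function. (2) For any Radon measure $\mu$ on $(X,\mathcal{O})$ with $\mu(X)=\infty$, $\mu(\{x\})=0$ for all $x$, and $\mu(K_w)>0$ for all $w\in T$, the function $g_\mu(w)=\mu(K_w)$ is a weight function.
   Context: Bi-infinite tree: $T$ countable, $\pi:T\to T$ with (T1) any $w,v$ have $n,m\ge0$ with $\pi^n(w)=\pi^m(v)$, (T2) $\pi^n(w)\ne w$ for $n\ge1$; locally finite: $\pi^{-1}(w)=S(w)$ finite for all $w$. Height $[w]=n-m$ where $\pi^n(w)=\pi^m(\phi)$, $(T)_n=\{w:[w]=n\}$, $\Sigma^*$ = sequences $(\omega_n)_{n\in\mathbb{Z}}$ with $\omega_n\in(T)_n$ and $\pi(\omega_{n+1})=\omega_n$. Partition: $w\mapsto K_w$ nonempty compact subsets of $X$ that are not single points, with (P1) $\bigcup_{v\in S(w)}K_v=K_w$, (P2) $\bigcap_{m\ge0}K_{\omega_m}$ is a single point for every $\omega\in\Sigma^*$, (P3) $\bigcup_{w\in(T)_0}K_w=X$. A weight function is $g:T\to(0,\infty)$ with (G1) $\lim_{n\to\infty}g(\pi^n(\phi))=\infty$, (G2) $g(\pi(w))\ge g(w)$ for all $w$, (G3) $\lim_{m\to\infty}g(\omega_m)=0$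 for all $\omega\in\Sigma^*$. *)

theory Defs
  imports "HOL-Analysis.Analysis"
begin

definition bi_infinite_tree :: "'b set \<Rightarrow> ('b \<Rightarrow> 'b) \<Rightarrow> 'b \<Rightarrow> bool" where
  "bi_infinite_tree T \<pi> \<phi> \<longleftrightarrow>
     countable T \<and> \<phi> \<in> T \<and> \<pi> ` T \<subseteq> T \<and>
     (\<forall>w\<in>T. \<forall>v\<in>T. \<exists>n m. (\<pi> ^^ n) w = (\<pi> ^^ m) v) \<and>
     (\<forall>w\<in>T. \<forall>n::nat. n \<ge> 1 \<longrightarrow> (\<pi> ^^ n) w \<noteq> w)"

definition tree_children :: "'b set \<Rightarrow> ('b \<Rightarrow> 'b) \<Rightarrow> 'b \<Rightarrow> 'b set" where
  "tree_children T \<pi> w = {v \<in> T. \<pi> v = w}"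

definition locally_finite_tree :: "'b set \<Rightarrow> ('b \<Rightarrow> 'b) \<Rightarrow> bool" where
  "locally_finite_tree T \<pi> \<longleftrightarrow> (\<forall>w\<in>T. finite (tree_children T \<pi> w))"

text \<open>Height [w] = n - m where pi^n(w) = pi^m(phi) (well defined by (T1),(T2)).\<close>
definition tree_height :: "('b \<Rightarrow> 'b) \<Rightarrow> 'b \<Rightarrow> 'b \<Rightarrow> int" where
  "tree_height \<pi> \<phi> w = (THE k. \<exists>n m. (\<pi> ^^ n) w = (\<pi> ^^ m) \<phi> \<and> k = int n - int m)"

definition tree_level :: "'b set \<Rightarrow> ('b \<Rightarrow> 'b) \<Rightarrow> 'b \<Rightarrow> int \<Rightarrow> 'b set" where
  "tree_level T \<pi> \<phi> k = {w \<in> T. tree_height \<pi> \<phi> w = k}"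

definition Sigma_star :: "'b set \<Rightarrow> ('b \<Rightarrow> 'b) \<Rightarrow> 'b \<Rightarrow> (int \<Rightarrow> 'b) set" where
  "Sigma_star T \<pi> \<phi> = {\<omega>. (\<forall>n. \<omega> n \<in> tree_level T \<pi> \<phi> n) \<and> (\<forall>n. \<pi> (\<omega> (n + 1)) = \<omega> n)}"

definition tree_partition ::
  "'a topology \<Rightarrow> 'b set \<Rightarrow> ('b \<Rightarrow> 'b) \<Rightarrow> 'b \<Rightarrow> ('b \<Rightarrow> 'a set) \<Rightarrow> bool" where
  "tree_partition X T \<pi> \<phi> K \<longleftrightarrow>
     (\<forall>w\<in>T. K w \<noteq> {} \<and> compactin X (K w) \<and> \<not> (\<exists>x. K w = {x})) \<and>
     (\<forall>w\<in>T. \<Union> (K ` tree_children T \<pi> w) = K w) \<and>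
     (\<forall>\<omega>\<in>Sigma_star T \<pi> \<phi>. \<exists>x. (\<Inter>m::nat. K (\<omega> (int m))) = {x}) \<and>
     \<Union> (K ` tree_level T \<pi> \<phi> 0) = topspace X"

definition weight_function :: "'b set \<Rightarrow> ('b \<Rightarrow> 'b) \<Rightarrow> 'b \<Rightarrow> ('b \<Rightarrow> real) \<Rightarrow> bool" where
  "weight_function T \<pi> \<phi> g \<longleftrightarrow>
     (\<forall>w\<in>T. g w > 0) \<and>
     filterlim (\<lambda>n. g ((\<pi> ^^ n) \<phi>)) at_top sequentially \<and>
     (\<forall>w\<in>T. g (\<pi> w) \<ge> g w) \<and>
     (\<forall>\<omega>\<in>Sigma_star T \<pi> \<phi>. (\<lambda>m::nat. g (\<omega> (int m))) \<longlonglongrightarrow> 0)"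

definition sigma_compact_space :: "'a topology \<Rightarrow> bool" where
  "sigma_compact_space X \<longleftrightarrow>
     (\<exists>C :: nat \<Rightarrow> 'a set. (\<forall>n. compactin X (C n)) \<and> (\<Union>n. C n) = topspace X)"

definition no_isolated_points :: "'a topology \<Rightarrow> bool" where
  "no_isolated_points X \<longleftrightarrow> (\<forall>x\<in>topspace X. \<not> openin X {x})"

definition mdiam :: "('a \<Rightarrow> 'a \<Rightarrow> real) \<Rightarrow> 'a set \<Rightarrow> ereal" where
  "mdiam d S = (SUP x\<in>S. SUP y\<in>S. ereal (d x y))"

definition borel_of :: "'a topology \<Rightarrow> 'a measure" where
  "borel_of X = sigma (topspace X) {U. openin X U}"

definition radon_measure :: "'a topology \<Rightarrow> 'a measure \<Rightarrow> bool" where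
  "radon_measure X \<mu> \<longleftrightarrow>
     space \<mu> = topspace X \<and> sets \<mu> = sets (borel_of X) \<and>
     (\<forall>x\<in>topspace X. \<exists>U. openin X U \<and> x \<in> U \<and> emeasure \<mu> U < \<infinity>) \<and>
     (\<forall>A\<in>sets \<mu>. emeasure \<mu> A = (INF U\<in>{U. openin X U \<and> A \<subseteq> U}. emeasure \<mu> U)) \<and>
     (\<forall>U. openin X U \<longrightarrow> emeasure \<mu> U = (SUP C\<in>{C. compactin X C \<and> C \<subseteq> U}. emeasure \<mu> C))"

end

theory Submission
  imports Defs
begin

lemma bt_phi: "bi_infinite_tree T \<pi> \<phi> \<Longrightarrow> \<phi> \<in> T"
  unfolding bi_infinite_tree_def by (elim conjE)

lemma bt_pi: "bi_infinite_tree T \<pi> \<phi> \<Longrightarrow> w \<in> T \<Longrightarrow> \<pi> w \<in> T"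
  unfolding bi_infinite_tree_def by (elim conjE) blast

lemma bt_T1: "bi_infinite_tree T \<pi> \<phi> \<Longrightarrow> w \<in> T \<Longrightarrow> v \<in> T \<Longrightarrow> \<exists>n m. (\<pi> ^^ n) w = (\<pi> ^^ m) v"
  unfolding bi_infinite_tree_def by (elim conjE) blast

lemma tp_cpt: "tree_partition X T \<pi> \<phi> K \<Longrightarrow> w \<in> T \<Longrightarrow>
    compactin X (K w) \<and> K w \<noteq> {} \<and> \<not> (\<exists>x. K w = {x})"
  unfolding tree_partition_def by (elim conjE) blast

lemma tp_ch: "tree_partition X T \<pi> \<phi> K \<Longrightarrow> w \<in> T \<Longrightarrow> \<Union> (K ` tree_children T \<pi> w) = K w"
  unfolding tree_partition_def by (elim conjE) blast

lemma tp_sig: "tree_partition X T \<pi> \<phi> K \<Longrightarrow> \<omega> \<in> Sigma_star T \<pi> \<phi> \<Longrightarrow>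
    \<exists>x. (\<Inter>m::nat. K (\<omega> (int m))) = {x}"
  unfolding tree_partition_def by (elim conjE) blast

lemma tp_cov: "tree_partition X T \<pi> \<phi> K \<Longrightarrow> \<Union> (K ` tree_level T \<pi> \<phi> 0) = topspace X"
  unfolding tree_partition_def by (elim conjE)

lemma tree_pow_in:
  assumes "bi_infinite_tree T \<pi> \<phi>" "w \<in> T" shows "(\<pi> ^^ n) w \<in> T"
  using assms by (induction n) (auto intro: bt_pi)

lemma part_sub_parent:
  assumes "bi_infinite_tree T \<pi> \<phi>" "tree_partition X T \<pi> \<phi> K" "w \<in> T"
  shows "K w \<subseteq> K (\<pi> w)"
proof -
  have pw: "\<pi> w \<in> T" using bt_pi[OF assms(1,3)] .
  have "w \<in> tree_children T \<pi> (\<pi> w)" using assms(3) by (simp add: tree_children_def)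
  hence "K w \<subseteq> \<Union> (K ` tree_children T \<pi> (\<pi> w))" by blast
  also have "\<dots> = K (\<pi> w)" using tp_ch[OF assms(2) pw] .
  finally show ?thesis .
qed

lemma part_sub_pow:
  assumes "bi_infinite_tree T \<pi> \<phi>" "tree_partition X T \<pi> \<phi> K" "w \<in> T"
  shows "K w \<subseteq> K ((\<pi> ^^ n) w)"
proof (induction n)
  case (Suc n)
  have "K ((\<pi> ^^ n) w) \<subseteq> K (\<pi> ((\<pi> ^^ n) w))"
    by (rule part_sub_parent[OF assms(1,2) tree_pow_in[OF assms(1,3)]])
  with Suc show ?case by simp
qed simp

lemma part_incseq:
  assumes "bi_infinite_tree T \<pi> \<phi>" "tree_partition X T \<pi> \<phi> K"
  shows "incseq (\<lambda>n. K ((\<pi> ^^ n) \<phi>))"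
proof (rule incseq_SucI)
  fix n
  have "\<phi> \<in> T" using bt_phi[OF assms(1)] .
  show "K ((\<pi> ^^ n) \<phi>) \<subseteq> K ((\<pi> ^^ Suc n) \<phi>)"
    using part_sub_parent[OF assms tree_pow_in[OF assms(1) \<open>\<phi> \<in> T\<close>]] by simp
qed

lemma part_sub_top:
  assumes "tree_partition X T \<pi> \<phi> K" "w \<in> T"
  shows "K w \<subseteq> topspace X"
  using tp_cpt[OF assms] compactin_subset_topspace by blast

lemma part_union:
  assumes "bi_infinite_tree T \<pi> \<phi>" "tree_partition X T \<pi> \<phi> K"
  shows "(\<Union>n. K ((\<pi> ^^ n) \<phi>)) = topspace X"
proof
  have "\<phi> \<in> T" using bt_phi[OF assms(1)] .
  show "(\<Union>n. K ((\<pi> ^^ n) \<phi>)) \<subseteq> topspace X"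
    using part_sub_top[OF assms(2) tree_pow_in[OF assms(1) \<open>\<phi> \<in> T\<close>]] by blast
  show "topspace X \<subseteq> (\<Union>n. K ((\<pi> ^^ n) \<phi>))"
  proof
    fix x assume "x \<in> topspace X"
    then obtain w where w: "w \<in> tree_level T \<pi> \<phi> 0" "x \<in> K w"
      using tp_cov[OF assms(2)] by blast
    hence wT: "w \<in> T" by (simp add: tree_level_def)
    then obtain n m where nm: "(\<pi> ^^ n) w = (\<pi> ^^ m) \<phi>"
      using bt_T1[OF assms(1) wT \<open>\<phi> \<in> T\<close>] by blast
    have "x \<in> K ((\<pi> ^^ n) w)" using part_sub_pow[OF assms wT] w by blast
    thus "x \<in> (\<Union>n. K ((\<pi> ^^ n) \<phi>))" using nm by auto
  qed
qed

lemma sigma_in_T: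
  assumes "\<omega> \<in> Sigma_star T \<pi> \<phi>" shows "\<omega> n \<in> T"
  using assms unfolding Sigma_star_def tree_level_def by blast

lemma sigma_decseq:
  assumes "bi_infinite_tree T \<pi> \<phi>" "tree_partition X T \<pi> \<phi> K" "\<omega> \<in> Sigma_star T \<pi> \<phi>"
  shows "decseq (\<lambda>m::nat. K (\<omega> (int m)))"
proof (rule decseq_SucI)
  fix m :: nat
  have "\<pi> (\<omega> (int m + 1)) = \<omega> (int m)" using assms(3) unfolding Sigma_star_def by blast
  moreover have "K (\<omega> (int m + 1)) \<subseteq> K (\<pi> (\<omega> (int m + 1)))"
    by (rule part_sub_parent[OF assms(1,2) sigma_in_T[OF assms(3)]])
  ultimately show "K (\<omega> (int (Suc m))) \<subseteq> K (\<omega> (int m))" by (simp add: add.commute)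
qed

lemma nested_compact_shrink:
  assumes "compactin X (C 0)" "\<And>m. closedin X (C m)" "decseq C" "(\<Inter>m. C m) = {x}"
    "openin X U" "x \<in> U"
  shows "\<exists>N. C N \<subseteq> U"
proof -
  let ?V = "\<lambda>m::nat. topspace X - C m"
  let ?U = "insert U (range ?V)"
  have op: "\<forall>V\<in>?U. openin X V" using assms(2,5) by auto
  have cov: "C 0 \<subseteq> \<Union>?U"
  proof
    fix y assume y: "y \<in> C 0"
    have yt: "y \<in> topspace X" using y assms(1) compactin_subset_topspace by blast
    show "y \<in> \<Union>?U"
    proof (cases "\<forall>m. y \<in> C m")
      case True then have "y = x" using assms(4) by auto
      then show ?thesis using assms(6) by auto
    next
      case False then obtain m where "y \<notin> C m" by blast
      then show ?thesis using yt by auto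
    qed
  qed
  obtain F where F: "finite F" "F \<subseteq> ?U" "C 0 \<subseteq> \<Union>F"
    using assms(1) op cov unfolding compactin_def by metis
  have "F - {U} \<subseteq> range ?V" using F(2) by blast
  then obtain F0 where F0: "finite F0" "F - {U} = ?V ` F0"
    using F(1) by (metis finite_Diff finite_subset_image subset_UNIV)
  define N where "N = Max (insert 0 F0)"
  have "\<And>m. m \<in> F0 \<Longrightarrow> C N \<subseteq> C m"
    using assms(3) F0(1) by (simp add: N_def decseq_def)
  moreover have "C N \<subseteq> C 0" using assms(3) by (simp add: decseq_def)
  have "C N \<subseteq> U"
  proof
    fix y assume yN: "y \<in> C N"
    hence "y \<in> C 0" using \<open>C N \<subseteq> C 0\<close> by blast
    then obtain G where G: "G \<in> F" "y \<in> G" using F(3) by blast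
    show "y \<in> U"
    proof (cases "G = U")
      case True thus ?thesis using G by simp
    next
      case False
      hence "G \<in> ?V ` F0" using G(1) F0(2) by blast
      then obtain m where m: "m \<in> F0" "G = ?V m" by blast
      have "y \<in> C m" using yN \<open>\<And>m. m \<in> F0 \<Longrightarrow> C N \<subseteq> C m\<close>[OF m(1)] by blast
      thus ?thesis using G(2) m(2) by simp
    qed
  qed
  thus ?thesis by blast
qed


lemma mdiam_bound:
  assumes "Metric_space M d" "S \<noteq> {}" "\<forall>x\<in>S. \<forall>y\<in>S. d x y \<le> B"
  shows "mdiam d S = ereal (real_of_ereal (mdiam d S))"
    "\<forall>x\<in>S. \<forall>y\<in>S. d x y \<le> real_of_ereal (mdiam d S)"
    "real_of_ereal (mdiam d S) \<le> B"
proof -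
  have up: "mdiam d S \<le> ereal B"
    unfolding mdiam_def using assms(3) by (intro SUP_least) auto
  have lo: "ereal (d x y) \<le> mdiam d S" if "x \<in> S" "y \<in> S" for x y
    unfolding mdiam_def using that by (intro SUP_upper2[of x] SUP_upper2[of y]) auto
  obtain x0 where "x0 \<in> S" using assms(2) by blast
  have "ereal (d x0 x0) \<le> mdiam d S" using lo \<open>x0 \<in> S\<close> by blast
  moreover have "0 \<le> d x0 x0" using Metric_space.nonneg[OF assms(1)] by blast
  ultimately have "mdiam d S \<noteq> -\<infinity>" "mdiam d S \<noteq> \<infinity>" using up by auto
  then obtain r where r: "mdiam d S = ereal r" by (cases "mdiam d S") auto
  show "mdiam d S = ereal (real_of_ereal (mdiam d S))" using r by simp
  show "\<forall>x\<in>S. \<forall>y\<in>S. d x y \<le> real_of_ereal (mdiam d S)" using lo r by auto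
  show "real_of_ereal (mdiam d S) \<le> B" using up r by simp
qed

lemma compact_bounded:
  assumes "Metric_space M d" "compactin (Metric_space.mtopology M d) S"
  shows "\<exists>B. \<forall>x\<in>S. \<forall>y\<in>S. d x y \<le> B"
  using Metric_space.compactin_imp_mbounded[OF assms] Metric_space.mbounded_alt[OF assms(1)]
  by blast

lemma closed_in_borel:
  assumes "radon_measure X \<mu>" "closedin X S" shows "S \<in> sets \<mu>"
proof -
  have P: "{U. openin X U} \<subseteq> Pow (topspace X)" by (auto dest: openin_subset)
  have "topspace X - S \<in> sigma_sets (topspace X) {U. openin X U}"
    using assms(2) by (intro sigma_sets.Basic) auto
  hence "topspace X - (topspace X - S) \<in> sigma_sets (topspace X) {U. openin X U}"
    by (rule sigma_sets.Compl)
  moreover have "topspace X - (topspace X - S) = S" using assms(2) closedin_subset by blast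
  ultimately show ?thesis using assms(1) P
    by (simp add: radon_measure_def borel_of_def sets_measure_of)
qed

lemma open_in_borel:
  assumes "radon_measure X \<mu>" "openin X S" shows "S \<in> sets \<mu>"
proof -
  have P: "{U. openin X U} \<subseteq> Pow (topspace X)" by (auto dest: openin_subset)
  have "S \<in> sigma_sets (topspace X) {U. openin X U}"
    using assms(2) by (intro sigma_sets.Basic) auto
  thus ?thesis using assms(1) P
    by (simp add: radon_measure_def borel_of_def sets_measure_of)
qed

lemma compact_finite_measure:
  assumes "radon_measure X \<mu>" "compactin X S" "S \<in> sets \<mu>"
  shows "emeasure \<mu> S < \<infinity>"
proof -
  let ?U = "{U. openin X U \<and> emeasure \<mu> U < \<infinity>}"
  have loc: "\<forall>x\<in>topspace X. \<exists>U. openin X U \<and> x \<in> U \<and> emeasure \<mu> U < \<infinity>"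
    using assms(1) unfolding radon_measure_def by (elim conjE)
  have "S \<subseteq> \<Union>?U"
  proof
    fix x assume "x \<in> S"
    hence "x \<in> topspace X" using compactin_subset_topspace[OF assms(2)] by blast
    then obtain U where "openin X U" "x \<in> U" "emeasure \<mu> U < \<infinity>" using loc by blast
    thus "x \<in> \<Union>?U" by blast
  qed
  then obtain F where F: "finite F" "F \<subseteq> ?U" "S \<subseteq> \<Union>F"
    using assms(2) unfolding compactin_def by (metis (no_types, lifting) mem_Collect_eq)
  have Fs: "id ` F \<subseteq> sets \<mu>" using F(2) open_in_borel[OF assms(1)] by auto
  have "emeasure \<mu> S \<le> emeasure \<mu> (\<Union>U\<in>F. id U)"
    using F Fs by (intro emeasure_mono) (auto intro!: sets.finite_Union)
  also have "\<dots> \<le> (\<Sum>U\<in>F. emeasure \<mu> (id U))"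
    by (rule emeasure_subadditive_finite[OF F(1) Fs])
  also have "\<dots> < \<infinity>" using F(1,2) by auto
  finally show ?thesis .
qed


lemma part1:
  assumes tree: "bi_infinite_tree T \<pi> \<phi>" and part: "tree_partition X T \<pi> \<phi> K"
    and ms: "Metric_space (topspace X) d" and mt: "Metric_space.mtopology (topspace X) d = X"
    and inf: "mdiam d (topspace X) = \<infinity>"
  shows "weight_function T \<pi> \<phi> (\<lambda>w. real_of_ereal (mdiam d (K w)))"
proof -
  let ?g = "\<lambda>w. real_of_ereal (mdiam d (K w))"
  have Hs: "Hausdorff_space X" using Metric_space.Hausdorff_space_mtopology[OF ms] mt by simp
  have cpt: "compactin X (K w)" "K w \<noteq> {}" "\<not> (\<exists>x. K w = {x})" if "w \<in> T" for w
    using tp_cpt[OF part that] by blast+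
  have bnd: "\<exists>B. \<forall>x\<in>K w. \<forall>y\<in>K w. d x y \<le> B" if "w \<in> T" for w
    using compact_bounded[OF ms] cpt[OF that] mt by simp
  have D: "\<forall>x\<in>K w. \<forall>y\<in>K w. d x y \<le> ?g w" if "w \<in> T" for w
    using bnd[OF that] mdiam_bound(2)[OF ms cpt(2)[OF that]] by blast
  have Dle: "?g w \<le> B" if "w \<in> T" "\<forall>x\<in>K w. \<forall>y\<in>K w. d x y \<le> B" for w B
    using mdiam_bound(3)[OF ms cpt(2)[OF that(1)] that(2)] .
  have sub: "K w \<subseteq> topspace X" if "w \<in> T" for w using part_sub_top[OF part that] .
  have pos: "\<forall>w\<in>T. ?g w > 0"
  proof
    fix w assume w: "w \<in> T"
    obtain x y where xy: "x \<in> K w" "y \<in> K w" "x \<noteq> y" using cpt(2,3)[OF w] by blast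
    have "0 < d x y" using Metric_space.mdist_pos_less[OF ms xy(3)] xy sub[OF w] by blast
    thus "?g w > 0" using D[OF w] xy by fastforce
  qed
  have mono: "\<forall>w\<in>T. ?g (\<pi> w) \<ge> ?g w"
  proof
    fix w assume w: "w \<in> T"
    have pw: "\<pi> w \<in> T" using bt_pi[OF tree w] .
    have "K w \<subseteq> K (\<pi> w)" by (rule part_sub_parent[OF tree part w])
    hence "\<forall>x\<in>K w. \<forall>y\<in>K w. d x y \<le> ?g (\<pi> w)" using D[OF pw] by blast
    thus "?g (\<pi> w) \<ge> ?g w" using Dle[OF w] by blast
  qed
  have phiT: "\<phi> \<in> T" using bt_phi[OF tree] .
  have G1: "filterlim (\<lambda>n. ?g ((\<pi> ^^ n) \<phi>)) at_top sequentially"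
    unfolding filterlim_at_top
  proof
    fix Z :: real
    have "ereal Z < mdiam d (topspace X)" using inf by simp
    then obtain x y where xy: "x \<in> topspace X" "y \<in> topspace X" "ereal Z < ereal (d x y)"
      unfolding mdiam_def less_SUP_iff by blast
    obtain a b where "x \<in> K ((\<pi> ^^ a) \<phi>)" "y \<in> K ((\<pi> ^^ b) \<phi>)"
      using xy(1,2) part_union[OF tree part] by blast
    moreover have inc: "incseq (\<lambda>n. K ((\<pi> ^^ n) \<phi>))" by (rule part_incseq[OF tree part])
    ultimately have "x \<in> K ((\<pi> ^^ n) \<phi>) \<and> y \<in> K ((\<pi> ^^ n) \<phi>)" if "n \<ge> max a b" for n
      using that unfolding incseq_def by (meson max.boundedE subsetD)
    hence "Z \<le> ?g ((\<pi> ^^ n) \<phi>)" if "n \<ge> max a b" for n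
      using D[OF tree_pow_in[OF tree phiT]] xy(3) that by fastforce
    thus "eventually (\<lambda>n. Z \<le> ?g ((\<pi> ^^ n) \<phi>)) sequentially"
      unfolding eventually_sequentially by blast
  qed
  have G3: "\<forall>\<omega>\<in>Sigma_star T \<pi> \<phi>. (\<lambda>m::nat. ?g (\<omega> (int m))) \<longlonglongrightarrow> 0"
  proof
    fix \<omega> assume om: "\<omega> \<in> Sigma_star T \<pi> \<phi>"
    let ?C = "\<lambda>m::nat. K (\<omega> (int m))"
    have CT: "\<omega> (int m) \<in> T" for m using sigma_in_T[OF om] .
    obtain x where x: "(\<Inter>m. ?C m) = {x}" using tp_sig[OF part om] by blast
    have xM: "x \<in> topspace X" using x sub[OF CT[of 0]] by blast
    have dec: "decseq ?C" by (rule sigma_decseq[OF tree part om])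
    show "(\<lambda>m::nat. ?g (\<omega> (int m))) \<longlonglongrightarrow> 0"
    proof (rule LIMSEQ_I)
      fix r :: real assume r: "0 < r"
      have "openin X (Metric_space.mball (topspace X) d x (r/3))"
        using Metric_space.openin_mball[OF ms] mt by metis
      moreover have "x \<in> Metric_space.mball (topspace X) d x (r/3)"
        using Metric_space.centre_in_mball_iff[OF ms] xM r by simp
      ultimately obtain N where N: "?C N \<subseteq> Metric_space.mball (topspace X) d x (r/3)"
        using nested_compact_shrink[of X ?C x, OF cpt(1)[OF CT[of 0]]
          compactin_imp_closedin[OF Hs cpt(1)[OF CT]] dec x] by blast
      have "norm (?g (\<omega> (int n)) - 0) < r" if n: "n \<ge> N" for n
      proof -
        have Cn: "?C n \<subseteq> Metric_space.mball (topspace X) d x (r/3)"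
          using N dec n unfolding decseq_def by blast
        have "\<forall>y\<in>?C n. \<forall>z\<in>?C n. d y z \<le> 2*r/3"
        proof (intro ballI)
          fix y z assume yz: "y \<in> ?C n" "z \<in> ?C n"
          have "y \<in> topspace X" "z \<in> topspace X" "d x y < r/3" "d x z < r/3"
            using Cn yz Metric_space.in_mball[OF ms] by blast+
          moreover have "d y z \<le> d y x + d x z"
            using Metric_space.triangle[OF ms] xM calculation by blast
          moreover have "d y x = d x y" using Metric_space.commute[OF ms] by blast
          ultimately show "d y z \<le> 2*r/3" by linarith
        qed
        hence "?g (\<omega> (int n)) \<le> 2*r/3" using Dle[OF CT] by blast
        moreover have "?g (\<omega> (int n)) > 0" using pos CT by blast
        ultimately have "\<bar>?g (\<omega> (int n))\<bar> < r" using r by linarith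
        thus ?thesis by (simp only: real_norm_def diff_zero)
      qed
      thus "\<exists>N. \<forall>n\<ge>N. norm (?g (\<omega> (int n)) - 0) < r" by blast
    qed
  qed
  show ?thesis unfolding weight_function_def by (intro conjI pos mono G1 G3)
qed


lemma part2:
  assumes tree: "bi_infinite_tree T \<pi> \<phi>" and part: "tree_partition X T \<pi> \<phi> K"
    and Hs: "Hausdorff_space X"
    and rad: "radon_measure X \<mu>" and inf: "emeasure \<mu> (topspace X) = \<infinity>"
    and pt: "\<forall>x\<in>topspace X. emeasure \<mu> {x} = 0" and kpos: "\<forall>w\<in>T. emeasure \<mu> (K w) > 0"
  shows "weight_function T \<pi> \<phi> (\<lambda>w. enn2real (emeasure \<mu> (K w)))"
proof -
  let ?g = "\<lambda>w. enn2real (emeasure \<mu> (K w))"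
  have cpt: "compactin X (K w)" if "w \<in> T" for w
    using tp_cpt[OF part that] by blast
  have meas: "K w \<in> sets \<mu>" if "w \<in> T" for w
    using closed_in_borel[OF rad compactin_imp_closedin[OF Hs cpt[OF that]]] .
  have fin: "emeasure \<mu> (K w) < \<infinity>" if "w \<in> T" for w
    using compact_finite_measure[OF rad cpt[OF that] meas[OF that]] .
  have pos: "\<forall>w\<in>T. ?g w > 0" using kpos fin by (simp add: enn2real_positive_iff)
  have mono: "\<forall>w\<in>T. ?g (\<pi> w) \<ge> ?g w"
  proof
    fix w assume w: "w \<in> T"
    have pw: "\<pi> w \<in> T" using bt_pi[OF tree w] .
    have "emeasure \<mu> (K w) \<le> emeasure \<mu> (K (\<pi> w))"
      using part_sub_parent[OF tree part w] meas[OF pw] by (rule emeasure_mono)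
    moreover have "emeasure \<mu> (K (\<pi> w)) < top" using fin[OF pw] by simp
    ultimately show "?g (\<pi> w) \<ge> ?g w" by (rule enn2real_mono)
  qed
  have phiT: "\<phi> \<in> T" using bt_phi[OF tree] .
  let ?A = "\<lambda>n. K ((\<pi> ^^ n) \<phi>)"
  have AT: "(\<pi> ^^ n) \<phi> \<in> T" for n using tree_pow_in[OF tree phiT] .
  have G1: "filterlim (\<lambda>n. ?g ((\<pi> ^^ n) \<phi>)) at_top sequentially"
    unfolding filterlim_at_top
  proof
    fix Z :: real
    have rs: "range ?A \<subseteq> sets \<mu>" using meas AT by blast
    have inc: "incseq ?A" by (rule part_incseq[OF tree part])
    have "(SUP n. emeasure \<mu> (?A n)) = emeasure \<mu> (\<Union>n. ?A n)"
      by (rule SUP_emeasure_incseq[OF rs inc])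
    also have "\<dots> = \<infinity>" using part_union[OF tree part] inf by simp
    finally have S: "(SUP n. emeasure \<mu> (?A n)) = \<infinity>" .
    have "ennreal Z < (SUP n. emeasure \<mu> (?A n))" unfolding S by simp
    then obtain N where N: "ennreal Z < emeasure \<mu> (?A N)" unfolding less_SUP_iff by blast
    have "Z \<le> ?g ((\<pi> ^^ n) \<phi>)" if "n \<ge> N" for n
    proof -
      have "emeasure \<mu> (?A N) \<le> emeasure \<mu> (?A n)"
        using inc that meas[OF AT] by (intro emeasure_mono) (auto simp: incseq_def)
      hence le: "ennreal Z \<le> emeasure \<mu> (?A n)" by (rule order_trans[OF less_imp_le[OF N]])
      have lt: "emeasure \<mu> (?A n) < top" using fin[OF AT, of n] by simp
      have "enn2real (ennreal Z) \<le> ?g ((\<pi> ^^ n) \<phi>)"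
        by (rule enn2real_mono[OF le lt])
      moreover have "Z \<le> enn2real (ennreal Z)" by (cases "Z \<ge> 0") (auto simp: ennreal_neg)
      ultimately show ?thesis by linarith
    qed
    thus "eventually (\<lambda>n. Z \<le> ?g ((\<pi> ^^ n) \<phi>)) sequentially"
      unfolding eventually_sequentially by blast
  qed
  have G3: "\<forall>\<omega>\<in>Sigma_star T \<pi> \<phi>. (\<lambda>m::nat. ?g (\<omega> (int m))) \<longlonglongrightarrow> 0"
  proof
    fix \<omega> assume om: "\<omega> \<in> Sigma_star T \<pi> \<phi>"
    let ?C = "\<lambda>m::nat. K (\<omega> (int m))"
    have CT: "\<omega> (int m) \<in> T" for m using sigma_in_T[OF om] .
    obtain x where x: "(\<Inter>m. ?C m) = {x}" using tp_sig[OF part om] by blast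
    have xM: "x \<in> topspace X" using x part_sub_top[OF part CT[of 0]] by blast
    have dec: "decseq ?C" by (rule sigma_decseq[OF tree part om])
    have "(\<lambda>m. emeasure \<mu> (?C m)) \<longlonglongrightarrow> emeasure \<mu> (\<Inter>m. ?C m)"
    proof (rule Lim_emeasure_decseq)
      show "range ?C \<subseteq> sets \<mu>" using meas[OF CT] by blast
      show "decseq ?C" by (rule dec)
      show "emeasure \<mu> (?C m) \<noteq> \<infinity>" for m using fin[OF CT, of m] by simp
    qed
    moreover have "emeasure \<mu> (\<Inter>m. ?C m) = ennreal 0" using x pt xM by simp
    ultimately have "(\<lambda>m. emeasure \<mu> (?C m)) \<longlonglongrightarrow> ennreal 0" by simp
    thus "(\<lambda>m::nat. ?g (\<omega> (int m))) \<longlonglongrightarrow> 0" by (rule tendsto_enn2real) simp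
  qed
  show ?thesis unfolding weight_function_def by (intro conjI pos mono G1 G3)
qed

theorem proposition3p2:
  fixes X :: "'a topology" and T :: "'b set" and \<pi> :: "'b \<Rightarrow> 'b" and \<phi> :: 'b
    and K :: "'b \<Rightarrow> 'a set"
  assumes "metrizable_space X" and "sigma_compact_space X" and "no_isolated_points X"
    and "bi_infinite_tree T \<pi> \<phi>" and "locally_finite_tree T \<pi>"
    and "tree_partition X T \<pi> \<phi> K"
  shows "(\<forall>d. Metric_space (topspace X) d \<and> Metric_space.mtopology (topspace X) d = X
              \<and> mdiam d (topspace X) = \<infinity>
            \<longrightarrow> weight_function T \<pi> \<phi> (\<lambda>w. real_of_ereal (mdiam d (K w))))
       \<and> (\<forall>\<mu>. radon_measure X \<mu> \<and> emeasure \<mu> (topspace X) = \<infinity>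
              \<and> (\<forall>x\<in>topspace X. emeasure \<mu> {x} = 0) \<and> (\<forall>w\<in>T. emeasure \<mu> (K w) > 0)
            \<longrightarrow> weight_function T \<pi> \<phi> (\<lambda>w. enn2real (emeasure \<mu> (K w))))"
proof (intro conjI allI impI)
  fix d assume H: "Metric_space (topspace X) d \<and> Metric_space.mtopology (topspace X) d = X
              \<and> mdiam d (topspace X) = \<infinity>"
  show "weight_function T \<pi> \<phi> (\<lambda>w. real_of_ereal (mdiam d (K w)))"
    using H by (intro part1[OF assms(4,6)]) simp_all
next
  fix \<mu> assume H: "radon_measure X \<mu> \<and> emeasure \<mu> (topspace X) = \<infinity>
              \<and> (\<forall>x\<in>topspace X. emeasure \<mu> {x} = 0) \<and> (\<forall>w\<in>T. emeasure \<mu> (K w) > 0)"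
  show "weight_function T \<pi> \<phi> (\<lambda>w. enn2real (emeasure \<mu> (K w)))"
    using H by (intro part2[OF assms(4,6) metrizable_imp_Hausdorff_space[OF assms(1)]]) simp_all
qed

end
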